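(* Let $A$ be a countable non-empty set of agents and, for each $i\in A$, let $\mathbf{S}_i$ be a compact topological space; put $\mathbf{S}=\prod_{i\in A}\mathbf{S}_i$ with the product topology. Let $\mathcal{G}$ be a compact-strategies, open-preferences class of normal-form games over these agents and strategy spaces, and let $\mathcal{G}'\subseteq\mathcal{G}$ be dense in $\mathcal{G}$. If every game $G\in\mathcal{G}'$ has a Nash equilibrium, then every game $G\in\mathcal{G}$ has a Nash equilibrium.
   Context: A normal-form game over $A$ and $(\mathbf{S}_i)_{i\in A}$ is given by a family of preference relations $\prec_i^G\subseteq\mathbf{S}\times\mathbf{S}$, $i\in A$. A strategy profile $\sigma\in\mathbf{S}$ is a Nash equilibrium of $G$ if there is no agent $i$ and no $s_i\in\mathbf{S}_i$ with $\sigma\prec^G_i\sigma_{i\mapsto s_i}$, where $\sigma_{i\mapsto s_i}$ agrees with $\sigma$ except that its $i$-th component is $s_i$. A class $\mathcal{G}$ of such games (all with the same agents and strategy spaces) is called compact-strategies, open-preferences if every $\mathbf{S}_i$ is compact and $\mathcal{G}$ carries a topology such that the preferences depend continuously (uniformly) on the game: for each $i\in A$ the set $\{(G,\sigma,\sigma')\in\mathcal{G}\times\mathbf{S}\times\mathbf{S}\mid \sigma\prec^G_i\sigma'\}$ is open in $\mathcal{G}\times\mathbf{S}\times\mathbf{S}$ (in particular each $\prec_i^G$ is an open subset of $\mathbf{S}\times\mathbf{S}$). Density of $\mathcal{G}'$ refers to this topology on $\mathcal{G}$. *)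

theory Defs
  imports "HOL-Analysis.Analysis"
begin

definition profiles :: "'i set \<Rightarrow> ('i \<Rightarrow> 's topology) \<Rightarrow> ('i \<Rightarrow> 's) set" where
  "profiles A S = topspace (product_topology S A)"

text \<open>A game G is given by preferences pref G i :: profile => profile => bool
  (pref G i x y means x is strictly worse than y for agent i).
  Nash equilibrium of game G.\<close>
definition nash_equilibrium ::
  "'i set \<Rightarrow> ('i \<Rightarrow> 's topology) \<Rightarrow> ('g \<Rightarrow> 'i \<Rightarrow> ('i \<Rightarrow> 's) \<Rightarrow> ('i \<Rightarrow> 's) \<Rightarrow> bool)
     \<Rightarrow> 'g \<Rightarrow> ('i \<Rightarrow> 's) \<Rightarrow> bool" where
  "nash_equilibrium A S pref G \<sigma> \<longleftrightarrow>
     \<sigma> \<in> profiles A S \<and>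
     \<not> (\<exists>i\<in>A. \<exists>s\<in>topspace (S i). pref G i \<sigma> (\<sigma>(i := s)))"

text \<open>The class of games is the carrier of the topology TG.\<close>
definition compact_strategies_open_preferences ::
  "'i set \<Rightarrow> ('i \<Rightarrow> 's topology) \<Rightarrow> 'g topology
     \<Rightarrow> ('g \<Rightarrow> 'i \<Rightarrow> ('i \<Rightarrow> 's) \<Rightarrow> ('i \<Rightarrow> 's) \<Rightarrow> bool) \<Rightarrow> bool" where
  "compact_strategies_open_preferences A S TG pref \<longleftrightarrow>
     (\<forall>i\<in>A. compact_space (S i)) \<and>
     (\<forall>i\<in>A. openin (prod_topology TG (prod_topology (product_topology S A) (product_topology S A)))
        {(G, \<sigma>, \<sigma>'). G \<in> topspace TG \<and> \<sigma> \<in> profiles A S \<and> \<sigma>' \<in> profiles A S \<and> pref G i \<sigma> \<sigma>'})"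

end

theory Submission
  imports Defs
begin

lemma upd_cont:
  assumes "i \<in> A" "s \<in> topspace (S i)"
  shows "continuous_map (product_topology S A) (product_topology S A) (\<lambda>\<sigma>. \<sigma>(i := s))"
  unfolding continuous_map_componentwise
proof (intro conjI ballI)
  show "(\<lambda>\<sigma>. \<sigma>(i := s)) ` topspace (product_topology S A) \<subseteq> extensional A"
    using assms(1) by (auto simp: extensional_def)
next
  fix k assume k: "k \<in> A"
  show "continuous_map (product_topology S A) (S k) (\<lambda>x. (x(i := s)) k)"
  proof (cases "k = i")
    case True
    then show ?thesis using assms by simp
  next
    case False
    then show ?thesis using k by (simp add: continuous_map_product_projection)
  qed
qed

theorem theorem8:
  fixes A :: "'i set" and S :: "'i \<Rightarrow> 's topology" and TG :: "'g topology"
    and pref :: "'g \<Rightarrow> 'i \<Rightarrow> ('i \<Rightarrow> 's) \<Rightarrow> ('i \<Rightarrow> 's) \<Rightarrow> bool"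
    and G' :: "'g set"
  assumes "countable A" and "A \<noteq> {}"
    and "compact_strategies_open_preferences A S TG pref"
    and "G' \<subseteq> topspace TG" and "TG closure_of G' = topspace TG"
    and "\<forall>G\<in>G'. \<exists>\<sigma>. nash_equilibrium A S pref G \<sigma>"
  shows "\<forall>G\<in>topspace TG. \<exists>\<sigma>. nash_equilibrium A S pref G \<sigma>"
proof (intro ballI, rule ccontr)
  fix G assume G: "G \<in> topspace TG" and nn: "\<nexists>\<sigma>. nash_equilibrium A S pref G \<sigma>"
  then have noNE: "\<And>\<sigma>. \<not> nash_equilibrium A S pref G \<sigma>" by simp
  define P where "P = product_topology S A"
  have cpt: "\<forall>i\<in>A. compact_space (S i)"
    and op: "\<forall>i\<in>A. openin (prod_topology TG (prod_topology P P))
        {(G, \<sigma>, \<sigma>'). G \<in> topspace TG \<and> \<sigma> \<in> profiles A S \<and> \<sigma>' \<in> profiles A S \<and> pref G i \<sigma> \<sigma>'}"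
    using assms(3) unfolding compact_strategies_open_preferences_def P_def by simp_all
  have prof: "profiles A S = topspace P" by (simp add: profiles_def P_def)
  define Q where "Q i s = {x \<in> topspace (prod_topology TG P).
      (\<lambda>(H,\<sigma>). (H, \<sigma>, \<sigma>(i:=s))) x \<in>
        {(G, \<sigma>, \<sigma>'). G \<in> topspace TG \<and> \<sigma> \<in> profiles A S \<and> \<sigma>' \<in> profiles A S \<and> pref G i \<sigma> \<sigma>'}}" for i s
  define Ow where "Ow = {(H,\<sigma>). H \<in> topspace TG \<and> \<sigma> \<in> topspace P \<and>
      (\<exists>i\<in>A. \<exists>s\<in>topspace (S i). pref H i \<sigma> (\<sigma>(i:=s)))}"
  have Oweq: "Ow = (\<Union>i\<in>A. \<Union>s\<in>topspace (S i). Q i s)"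
  proof -
    have "\<sigma>(i:=s) \<in> topspace P" if "\<sigma> \<in> topspace P" "i \<in> A" "s \<in> topspace (S i)" for \<sigma> i s
      using continuous_map_funspace[OF upd_cont[of i A s S, OF that(2,3)]] that(1) unfolding P_def
      by (rule funcset_mem)
    note upd = this
    have Qs: "(H,\<sigma>) \<in> Q i s \<longleftrightarrow> H \<in> topspace TG \<and> \<sigma> \<in> topspace P \<and> \<sigma>(i:=s) \<in> topspace P
        \<and> pref H i \<sigma> (\<sigma>(i:=s))" for H \<sigma> i s
      unfolding Q_def prof by auto
    show ?thesis
    proof (rule set_eqI)
      fix x :: "'g \<times> ('i \<Rightarrow> 's)"
      obtain H \<sigma> where x: "x = (H,\<sigma>)" by (cases x)
      show "x \<in> Ow \<longleftrightarrow> x \<in> (\<Union>i\<in>A. \<Union>s\<in>topspace (S i). Q i s)"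
        unfolding x Ow_def using upd by (simp add: Qs) blast
    qed
  qed
  have oi: "openin (prod_topology TG P) (Q i s)" if i: "i \<in> A" and s: "s \<in> topspace (S i)" for i s
  proof -
    have "continuous_map (prod_topology TG P) (prod_topology TG (prod_topology P P))
         (\<lambda>(H,\<sigma>). (H, \<sigma>, \<sigma>(i:=s)))"
    proof -
      have c1: "continuous_map (prod_topology TG P) P (\<lambda>x. (snd x)(i:=s))"
        using continuous_map_compose[OF continuous_map_snd upd_cont[of i A s S, OF i s]]
        unfolding P_def by (simp add: o_def)
      have e: "(\<lambda>(H,\<sigma>). (H, \<sigma>, \<sigma>(i:=s))) = (\<lambda>x. (fst x, snd x, (snd x)(i:=s)))"
        by (simp add: fun_eq_iff split_beta)
      show ?thesis unfolding e continuous_map_paired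
        using c1 continuous_map_fst continuous_map_snd by blast
    qed
    then show ?thesis unfolding Q_def
      using op i by (intro openin_continuous_map_preimage) auto
  qed
  have "openin (prod_topology TG P) Ow"
    unfolding Oweq using oi by (intro openin_Union) auto
  moreover have "compactin P (topspace P)"
  proof -
    have "compact_space (product_topology S A)" using cpt by (simp add: compact_space_product_topology)
    then show ?thesis unfolding compact_space_def P_def .
  qed
  moreover have "{G} \<times> topspace P \<subseteq> Ow"
    using noNE G unfolding Ow_def nash_equilibrium_def prof by auto
  ultimately obtain U V where U: "openin TG U" "G \<in> U" and UV: "topspace P \<subseteq> V" "U \<times> V \<subseteq> Ow"
    using tube_lemma_right[of TG P Ow "topspace P" G] G by blast
  obtain H where H: "H \<in> G'" "H \<in> U"
  proof -
    have "G \<in> TG closure_of G'" using G assms(5) by simp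
    then show ?thesis using U that unfolding in_closure_of by blast
  qed
  then obtain \<sigma> where "nash_equilibrium A S pref H \<sigma>" using assms(6) by blast
  then have "\<sigma> \<in> topspace P" "\<not> (\<exists>i\<in>A. \<exists>s\<in>topspace (S i). pref H i \<sigma> (\<sigma>(i := s)))"
    unfolding nash_equilibrium_def prof by auto
  moreover have "(H, \<sigma>) \<in> Ow" using UV H calculation(1) by blast
  ultimately show False unfolding Ow_def by auto
qed

end
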